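(* Let $m,n$ be positive integers and $p$ an odd prime not dividing $m$. For $r\in\mathbb Z$ define $K_p(r,m)=\sum_{1\le k\le p-1,\ m\mid k-rp}\frac1k$. Then $$B_{p-1}\Big(\Big\{\frac{pn}m\Big\}\Big)-B_{p-1}\equiv m\sum_{r=1}^nK_p(r,m)\equiv-\sum_{\substack{1\le k\le\lfloor pn/m\rfloor\\ p\nmid k}}\frac1k\pmod p,$$ and moreover $K_p(r,m)\equiv-K_p(1-r,m)\pmod p$ for every $r\in\mathbb Z$.
   Context: $\{x\}$ denotes the fractional part and $\lfloor x\rfloor$ the integer part of $x$; $B_n(x)$ is the $n$th Bernoulli polynomial and $B_n=B_n(0)$. Congruences modulo $p$ are between rational numbers whose denominators are prime to $p$. *)

theory Defs
  imports Complex_Main "HOL-Computational_Algebra.Primes"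
begin

text \<open>Bernoulli numbers with the convention B_1 = -1/2 (so that B_n = B_n(0)):
  B_0 = 1 and sum_{k=0}^{n} C(n+1,k) B_k = 0 for n >= 1.\<close>
fun bernoulli_num :: "nat \<Rightarrow> rat" where
  "bernoulli_num n =
     (if n = 0 then 1
      else - (\<Sum>k<n. of_nat ((n + 1) choose k) * (if k < n then bernoulli_num k else 0))
             / of_nat (n + 1))"

definition bernoulli_poly :: "nat \<Rightarrow> rat \<Rightarrow> rat" where
  "bernoulli_poly n x = (\<Sum>k\<le>n. of_nat (n choose k) * bernoulli_num k * x ^ (n - k))"

definition p_integral :: "nat \<Rightarrow> rat \<Rightarrow> bool" where
  "p_integral p x \<longleftrightarrow> coprime (snd (quotient_of x)) (int p)"

definition rat_cong :: "rat \<Rightarrow> rat \<Rightarrow> nat \<Rightarrow> bool" where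
  "rat_cong a b p \<longleftrightarrow> p_integral p a \<and> p_integral p b \<and>
      int p dvd fst (quotient_of (a - b))"

definition K :: "nat \<Rightarrow> int \<Rightarrow> nat \<Rightarrow> rat" where
  "K p r m = (\<Sum>k\<in>{k\<in>{1..p-1}. int m dvd int k - r * int p}. 1 / of_nat k)"

end

theory Submission
  imports Defs "HOL-Number_Theory.Number_Theory"
begin


definition Zp :: "nat \<Rightarrow> rat set" where
  "Zp p = {x. \<exists>a b. coprime b (int p) \<and> x = of_int a / of_int b}"

definition pZ :: "nat \<Rightarrow> rat set" where
  "pZ p = {x. \<exists>a b. coprime b (int p) \<and> x = of_int (int p * a) / of_int b}"

context
  fixes p :: nat
  assumes pp: "prime p"
begin

lemma cop_nz: "coprime b (int p) \<Longrightarrow> b \<noteq> 0"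
  using pp by (metis coprime_0_left_iff prime_nat_int_transfer not_prime_unit)

lemma zp_int[simp]: "of_int a \<in> Zp p"
  unfolding Zp_def by (rule CollectI, rule exI[of _ a], rule exI[of _ 1]) simp

lemma zp_nat[simp]: "of_nat a \<in> Zp p"
  using zp_int[of "int a"] by simp

lemma zp_inv: "coprime b (int p) \<Longrightarrow> 1 / of_int b \<in> Zp p"
  unfolding Zp_def by (rule CollectI, rule exI[of _ 1], rule exI[of _ b]) simp

lemma zp_add: "x \<in> Zp p \<Longrightarrow> y \<in> Zp p \<Longrightarrow> x + y \<in> Zp p"
proof -
  assume "x \<in> Zp p" "y \<in> Zp p"
  then obtain a b c d where h: "coprime b (int p)" "x = of_int a / of_int b"
     "coprime d (int p)" "y = of_int c / of_int d" unfolding Zp_def by blast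
  have "b \<noteq> 0" "d \<noteq> 0" using h cop_nz by auto
  then have "x + y = of_int (a*d + c*b) / of_int (b*d)" using h by (simp add: field_simps)
  moreover have "coprime (b*d) (int p)" using h by simp
  ultimately show ?thesis unfolding Zp_def by blast
qed

lemma zp_mult: "x \<in> Zp p \<Longrightarrow> y \<in> Zp p \<Longrightarrow> x * y \<in> Zp p"
proof -
  assume "x \<in> Zp p" "y \<in> Zp p"
  then obtain a b c d where h: "coprime b (int p)" "x = of_int a / of_int b"
     "coprime d (int p)" "y = of_int c / of_int d" unfolding Zp_def by blast
  then have "x * y = of_int (a*c) / of_int (b*d)" by simp
  moreover have "coprime (b*d) (int p)" using h by simp
  ultimately show ?thesis unfolding Zp_def by blast
qed

lemma zp_minus: "x \<in> Zp p \<Longrightarrow> - x \<in> Zp p"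
  using zp_mult[OF zp_int[of "-1"]] by simp

lemma zp_diff: "x \<in> Zp p \<Longrightarrow> y \<in> Zp p \<Longrightarrow> x - y \<in> Zp p"
  using zp_add zp_minus by (metis diff_conv_add_uminus)

lemma zp_sum: "(\<And>i. i \<in> A \<Longrightarrow> f i \<in> Zp p) \<Longrightarrow> sum f A \<in> Zp p"
  by (induction A rule: infinite_finite_induct) (auto intro: zp_add simp: zp_int[of 0, simplified])

lemma zp_power: "x \<in> Zp p \<Longrightarrow> x ^ n \<in> Zp p"
  by (induction n) (auto intro: zp_mult simp: zp_int[of 1, simplified])

lemma zp_div: "x \<in> Zp p \<Longrightarrow> coprime b (int p) \<Longrightarrow> x / of_int b \<in> Zp p"
  using zp_mult[OF _ zp_inv] by (metis times_divide_eq_right mult_1_right)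

lemma zp_divn: "x \<in> Zp p \<Longrightarrow> \<not> p dvd b \<Longrightarrow> x / of_nat b \<in> Zp p"
  using zp_div[of x "int b"] pp
  by (metis of_int_of_nat_eq coprime_commute prime_imp_coprime coprime_int_iff)

lemma pz_zp: "x \<in> pZ p \<Longrightarrow> x \<in> Zp p"
  unfolding pZ_def Zp_def by blast

lemma pz_add: "x \<in> pZ p \<Longrightarrow> y \<in> pZ p \<Longrightarrow> x + y \<in> pZ p"
proof -
  assume "x \<in> pZ p" "y \<in> pZ p"
  then obtain a b c d where h: "coprime b (int p)" "x = of_int (int p * a) / of_int b"
     "coprime d (int p)" "y = of_int (int p * c) / of_int d" unfolding pZ_def by blast
  have "b \<noteq> 0" "d \<noteq> 0" using h cop_nz by auto
  then have "x + y = of_int (int p * (a*d + c*b)) / of_int (b*d)" using h by (simp add: field_simps)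
  moreover have "coprime (b*d) (int p)" using h by simp
  ultimately show ?thesis unfolding pZ_def by blast
qed

lemma pz_mult: "x \<in> pZ p \<Longrightarrow> y \<in> Zp p \<Longrightarrow> x * y \<in> pZ p"
proof -
  assume "x \<in> pZ p" "y \<in> Zp p"
  then obtain a b c d where h: "coprime b (int p)" "x = of_int (int p * a) / of_int b"
     "coprime d (int p)" "y = of_int c / of_int d" unfolding pZ_def Zp_def by blast
  then have "x * y = of_int (int p * (a*c)) / of_int (b*d)" by simp
  moreover have "coprime (b*d) (int p)" using h by simp
  ultimately show ?thesis unfolding pZ_def by blast
qed

lemma pz_p: "y \<in> Zp p \<Longrightarrow> of_nat p * y \<in> pZ p"
proof -
  assume "y \<in> Zp p"
  then obtain c d where h: "coprime d (int p)" "y = of_int c / of_int d" unfolding Zp_def by blast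
  then have "of_nat p * y = of_int (int p * c) / of_int d" by simp
  then show ?thesis using h unfolding pZ_def by blast
qed

lemma pz_0[simp]: "0 \<in> pZ p"
  using pz_p[of 0] zp_int[of 0] by simp

lemma pz_minus: "x \<in> pZ p \<Longrightarrow> - x \<in> pZ p"
  using pz_mult[OF _ zp_int[of "-1"]] by simp

lemma pz_diff: "x \<in> pZ p \<Longrightarrow> y \<in> pZ p \<Longrightarrow> x - y \<in> pZ p"
  using pz_add pz_minus by (metis diff_conv_add_uminus)

lemma pz_sum: "(\<And>i. i \<in> A \<Longrightarrow> f i \<in> pZ p) \<Longrightarrow> sum f A \<in> pZ p"
  by (induction A rule: infinite_finite_induct) (auto intro: pz_add)

lemma pz_multl: "x \<in> pZ p \<Longrightarrow> y \<in> Zp p \<Longrightarrow> y * x \<in> pZ p"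
  using pz_mult by (simp add: mult.commute)

lemma pz_int: "int p dvd a \<Longrightarrow> of_int a \<in> pZ p"
proof -
  assume "int p dvd a"
  then obtain k where "a = int p * k" by (auto elim!: dvdE)
  then show ?thesis using pz_p[of "of_int k"] zp_int[of k] by simp
qed

lemma zp_pint: "x \<in> Zp p \<Longrightarrow> p_integral p x"
proof -
  assume "x \<in> Zp p"
  then obtain a b where h: "coprime b (int p)" "x = of_int a / of_int b" unfolding Zp_def by blast
  obtain u v where q: "quotient_of x = (u, v)" by (cases "quotient_of x")
  have v: "v > 0" "coprime u v" using q quotient_of_denom_pos quotient_of_coprime by auto
  have xuv: "x = of_int u / of_int v" using q quotient_of_div by blast
  have "b \<noteq> 0" using h cop_nz by auto
  have "rat_of_int a / of_int b = of_int u / of_int v" using h(2) xuv by (rule subst)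
  then have "rat_of_int a * of_int v = of_int u * of_int b" using \<open>b \<noteq> 0\<close> v
    by (simp add: frac_eq_eq)
  then have "rat_of_int (u * b) = of_int (a * v)" by simp
  then have "u * b = a * v" by (simp only: of_int_eq_iff)
  then have "v dvd u * b" by simp
  moreover have "coprime v u" using v(2) by (simp add: coprime_commute)
  ultimately have "v dvd b" using coprime_dvd_mult_right_iff[of v u b] by simp
  then have "coprime v (int p)" using coprime_divisors[OF _ dvd_refl h(1)] by blast
  then show ?thesis unfolding p_integral_def q by simp
qed

lemma pz_cong: "a \<in> Zp p \<Longrightarrow> b \<in> Zp p \<Longrightarrow> a - b \<in> pZ p \<Longrightarrow> rat_cong a b p"
proof -
  assume ab: "a \<in> Zp p" "b \<in> Zp p" "a - b \<in> pZ p"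
  then obtain c d where h: "coprime d (int p)" "a - b = of_int (int p * c) / of_int d" unfolding pZ_def by blast
  obtain u v where q: "quotient_of (a - b) = (u, v)" by (cases "quotient_of (a - b)")
  have v: "v > 0" using q quotient_of_denom_pos by auto
  have xuv: "a - b = of_int u / of_int v" using q quotient_of_div by blast
  have "d \<noteq> 0" using h cop_nz by auto
  have "rat_of_int (int p * c) / of_int d = of_int u / of_int v" using h(2) xuv by (rule subst)
  then have "rat_of_int (int p * c) * of_int v = of_int u * of_int d" using \<open>d \<noteq> 0\<close> v
    by (simp add: frac_eq_eq)
  then have "rat_of_int (u * d) = of_int (int p * c * v)" by simp
  then have "u * d = int p * c * v" by (simp only: of_int_eq_iff)
  then have "int p dvd u * d" by (metis dvd_triv_left mult.assoc)
  moreover have "coprime (int p) d" using h(1) by (simp add: coprime_commute)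
  ultimately have "int p dvd u" using coprime_dvd_mult_left_iff[of "int p" d u] by simp
  then show ?thesis unfolding rat_cong_def using q ab zp_pint by simp
qed

end


declare bernoulli_num.simps[simp del]

lemma bern_def: "n > 0 \<Longrightarrow> bernoulli_num n = - (\<Sum>k<n. of_nat ((n + 1) choose k) * bernoulli_num k) / of_nat (n + 1)"
proof -
  assume "n > 0"
  have "(\<Sum>k<n. of_nat ((n + 1) choose k) * (if k < n then bernoulli_num k else 0))
     = (\<Sum>k<n. of_nat ((n + 1) choose k) * bernoulli_num k)" by (rule sum.cong) auto
  then show ?thesis using \<open>n > 0\<close> by (subst bernoulli_num.simps) simp
qed

lemma bern_rec: "M \<ge> 2 \<Longrightarrow> (\<Sum>k<M. of_nat (M choose k) * bernoulli_num k) = 0"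
proof -
  assume M: "M \<ge> 2"
  define n where "n = M - 1"
  have n: "n > 0" "M = Suc n" using M n_def by auto
  have "(\<Sum>k<M. of_nat (M choose k) * bernoulli_num k)
     = (\<Sum>k<n. of_nat ((n+1) choose k) * bernoulli_num k) + of_nat (n+1) * bernoulli_num n"
    using n by simp
  also have "\<dots> = 0" using bern_def[OF n(1)] by (simp add: field_simps del: of_nat_Suc)
  finally show ?thesis .
qed

lemma bern0[simp]: "bernoulli_num 0 = 1"
  by (subst bernoulli_num.simps) simp

lemma bern_zp: "prime p \<Longrightarrow> k + 1 < p \<Longrightarrow> bernoulli_num k \<in> Zp p"
proof (induction k rule: less_induct)
  case (less n)
  show ?case
  proof (cases "n = 0")
    case True then show ?thesis using zp_int[OF less(2), of 1] by simp
  next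
    case False
    have "\<not> p dvd (n + 1)" using less(3) by (simp add: nat_dvd_not_less)
    moreover have "- (\<Sum>k<n. of_nat ((n + 1) choose k) * bernoulli_num k) \<in> Zp p"
      using less by (auto intro!: zp_minus zp_sum zp_mult)
    ultimately have X: "- (\<Sum>k<n. of_nat ((n + 1) choose k) * bernoulli_num k) / of_nat (n+1) \<in> Zp p"
      using zp_divn[OF less(2)] by blast
    have "bernoulli_num n = - (\<Sum>k<n. of_nat ((n + 1) choose k) * bernoulli_num k) / of_nat (n+1)"
      by (rule bern_def) (use False in simp)
    then show ?thesis using X by metis
  qed
qed

lemma bp_rev: "bernoulli_poly n x = (\<Sum>k\<le>n. of_nat (n choose k) * bernoulli_num (n-k) * x^k)"
  unfolding bernoulli_poly_def
  by (rule sum.reindex_bij_witness[where i="\<lambda>k. n-k" and j="\<lambda>k. n-k"])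
     (auto simp: binomial_symmetric[symmetric])

lemma bp0: "n > 0 \<Longrightarrow> bernoulli_poly n 0 = bernoulli_num n"
proof -
  assume "n > 0"
  have "bernoulli_poly n 0 = (\<Sum>k\<le>n. if k = 0 then bernoulli_num n else 0)"
    unfolding bp_rev by (rule sum.cong) auto
  then show ?thesis by simp
qed

lemma bp1: "bernoulli_poly M 1 = bernoulli_num M + (if M = 1 then 1 else 0)"
proof -
  have "bernoulli_poly M 1 = (\<Sum>k<M. of_nat (M choose k) * bernoulli_num k) + bernoulli_num M"
    unfolding bernoulli_poly_def by (simp add: lessThan_Suc_atMost[symmetric])
  moreover have "(\<Sum>k<M. of_nat (M choose k) * bernoulli_num k) = (if M = 1 then 1 else 0)"
  proof (cases "M \<ge> 2")
    case True then show ?thesis using bern_rec by simp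
  next
    case False then have "M = 0 \<or> M = 1" by auto
    then show ?thesis by auto
  qed
  ultimately show ?thesis by simp
qed

lemma inner: "i \<le> n \<Longrightarrow> (\<Sum>k\<le>n. of_nat (n choose k) * of_nat (k choose i) * bernoulli_num (n-k))
   = of_nat (n choose i) * bernoulli_poly (n-i) 1"
proof -
  assume i: "i \<le> n"
  have "(\<Sum>k\<le>n. of_nat (n choose k) * of_nat (k choose i) * bernoulli_num (n-k))
     = (\<Sum>k\<in>{i..n}. of_nat (n choose k) * of_nat (k choose i) * bernoulli_num (n-k))"
    by (rule sum.mono_neutral_right) auto
  also have "\<dots> = (\<Sum>k\<in>{i..n}. of_nat (n choose i) * (of_nat ((n-i) choose (k-i)) * bernoulli_num ((n-i)-(k-i))))"
  proof (rule sum.cong)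
    fix k assume k: "k \<in> {i..n}"
    then have "(n choose k) * (k choose i) = (n choose i) * ((n-i) choose (k-i))"
      using choose_mult[of i k n] by auto
    then have "(of_nat (n choose k) * of_nat (k choose i) :: rat) = of_nat (n choose i) * of_nat ((n-i) choose (k-i))"
      by (metis of_nat_mult)
    moreover have "n - k = (n-i)-(k-i)" using k by auto
    ultimately show "of_nat (n choose k) * of_nat (k choose i) * bernoulli_num (n-k)
       = of_nat (n choose i) * (of_nat ((n-i) choose (k-i)) * bernoulli_num ((n-i)-(k-i)))"
      by (simp add: mult.assoc)
  qed simp
  also have "\<dots> = of_nat (n choose i) * (\<Sum>l\<le>n-i. of_nat ((n-i) choose l) * bernoulli_num ((n-i)-l))"
    unfolding sum_distrib_left
    by (rule sum.reindex_bij_witness[where i="\<lambda>l. l+i" and j="\<lambda>k. k-i"]) (use i in auto)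
  also have "\<dots> = of_nat (n choose i) * bernoulli_poly (n-i) 1"
    unfolding bp_rev by simp
  finally show ?thesis .
qed

lemma bp_diff: "n > 0 \<Longrightarrow> bernoulli_poly n (x+1) - bernoulli_poly n x = of_nat n * x^(n-1)"
proof -
  assume n: "n > 0"
  have "bernoulli_poly n (x+1) = (\<Sum>k\<le>n. of_nat (n choose k) * bernoulli_num (n-k) *
           (\<Sum>i\<le>n. of_nat (k choose i) * x^i))"
  proof -
    have "(x+1)^k = (\<Sum>i\<le>n. of_nat (k choose i) * x^i)" if "k \<le> n" for k
    proof -
      have "(x+1)^k = (\<Sum>i\<le>k. of_nat (k choose i) * x^i)"
        by (simp add: binomial_ring mult.commute)
      also have "\<dots> = (\<Sum>i\<le>n. of_nat (k choose i) * x^i)"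
        by (rule sum.mono_neutral_left) (use that in auto)
      finally show ?thesis .
    qed
    then show ?thesis unfolding bp_rev by (intro sum.cong) auto
  qed
  also have "\<dots> = (\<Sum>i\<le>n. x^i * (\<Sum>k\<le>n. of_nat (n choose k) * of_nat (k choose i) * bernoulli_num (n-k)))"
    unfolding sum_distrib_left sum_distrib_right
    by (subst sum.swap) (auto intro!: sum.cong simp: ac_simps)
  also have "\<dots> = (\<Sum>i\<le>n. x^i * (of_nat (n choose i) * bernoulli_poly (n-i) 1))"
    by (intro sum.cong) (auto simp: inner)
  finally have e: "bernoulli_poly n (x+1) = \<dots>" .
  have cn: "n choose (n - 1) = n" using n binomial_symmetric[of 1 n] by simp
  have "bernoulli_poly n (x+1) - bernoulli_poly n x
     = (\<Sum>i\<le>n. x^i * of_nat (n choose i) * (bernoulli_poly (n-i) 1 - bernoulli_num (n-i)))"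
    unfolding e bp_rev[of n x] sum_subtractf[symmetric] by (intro sum.cong) (auto simp: algebra_simps)
  also have "\<dots> = (\<Sum>i\<le>n. if i = n - 1 then of_nat n * x^(n-1) else 0)"
    using n cn by (intro sum.cong) (auto simp: bp1)
  also have "\<dots> = of_nat n * x^(n-1)" using n by simp
  finally show ?thesis .
qed



lemma arith1:
  fixes m p r k n :: nat
  assumes m: "0 < m" and pp: "prime p" and r: "1 \<le> r" "r \<le> n"
    and k: "1 \<le> k" "k < p" and d: "m dvd r*p - k"
  shows "1 \<le> (r*p-k) div m \<and> (r*p-k) div m \<le> p*n div m \<and> \<not> p dvd ((r*p-k) div m)
     \<and> m*((r*p-k) div m) div p + 1 = r \<and> (m*((r*p-k) div m) div p + 1)*p - m*((r*p-k) div m) = k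
     \<and> m * ((r*p-k) div m) = r*p - k"
proof -
  define j where "j = (r*p-k) div m"
  have mj: "m * j = r*p - k" using d unfolding j_def by simp
  obtain r' where r': "r = Suc r'" using r by (cases r) auto
  have rp: "r*p = r'*p + p" using r' by simp
  have kp: "k \<le> r*p" using rp k by linarith
  have "r*p - k \<ge> 1" using rp k by linarith
  then have j1: "1 \<le> j" using mj by (cases j) auto
  have "r * p \<le> n * p" using r by simp
  moreover have "r*p - k < r*p" using k kp by linarith
  ultimately have "m * j < n * p" using mj by linarith
  then have "m * j < p * n" by (simp add: mult.commute)
  then have "j * m \<le> p * n" by (simp add: mult.commute)
  then have jn: "j \<le> p*n div m" using m by (simp add: less_eq_div_iff_mult_less_eq)
  have pj: "\<not> p dvd j"
  proof
    assume "p dvd j"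
    then have "p dvd r*p - k" using mj by (metis dvd_mult)
    moreover have "p dvd r*p" by simp
    ultimately have "p dvd r*p - (r*p - k)" by (simp add: dvd_diff_nat)
    then have "p dvd k" using kp by simp
    then show False using k by (simp add: nat_dvd_not_less)
  qed
  have eq: "m * j = r'*p + (p - k)" using mj rp k by simp
  have q: "m*j div p = r'"
  proof -
    have e2: "m*j = (p-k) + r'*p" using eq by simp
    have "(p-k) div p = 0" using k by simp
    moreover have "((p-k) + r'*p) div p = r' + (p-k) div p" using div_mult_self1[of p "p-k" r'] k by simp
    ultimately show ?thesis using e2 by simp
  qed
  have "(m*j div p + 1)*p - m*j = k" unfolding q using r' eq k by simp
  then show ?thesis using j1 jn pj q r' mj unfolding j_def[symmetric] by simp
qed

lemma arith2:
  fixes m p j n :: nat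
  assumes m: "0 < m" and pp: "prime p" and pm: "\<not> p dvd m" and j: "1 \<le> j" "j \<le> p*n div m"
    and pj: "\<not> p dvd j"
  shows "1 \<le> m*j div p + 1 \<and> m*j div p + 1 \<le> n \<and> 1 \<le> (m*j div p + 1)*p - m*j
    \<and> (m*j div p + 1)*p - m*j < p \<and> (m*j div p + 1)*p - ((m*j div p + 1)*p - m*j) = m * j"
proof -
  define q where "q = m*j div p"
  define s where "s = m*j mod p"
  have p0: "p > 0" using pp prime_gt_0_nat by blast
  have "\<not> p dvd m*j" using pp pm pj prime_dvd_mult_iff by blast
  then have s0: "s \<noteq> 0" "s < p" unfolding s_def using p0 by (auto simp: dvd_eq_mod_eq_0)
  have mj: "m*j = q*p + s" unfolding q_def s_def by simp
  have "j * m \<le> p * n" using j m by (simp add: less_eq_div_iff_mult_less_eq)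
  then have le: "m*j \<le> p*n" by (simp add: mult.commute)
  have "m*j \<noteq> p*n" using \<open>\<not> p dvd m*j\<close> by auto
  then have "q*p + s < n*p" using le mj by (simp add: mult.commute)
  then have "q*p < n*p" by linarith
  then have "q < n" by simp
  have e: "(q+1)*p - m*j = p - s" using mj s0 by simp
  show ?thesis unfolding q_def[symmetric] e using \<open>q < n\<close> s0 mj by auto
qed



lemma bp_neg: "n > 0 \<Longrightarrow> bernoulli_poly n (- of_nat a) - bernoulli_poly n 0
   = - of_nat n * (\<Sum>i=1..a. (- of_nat i)^(n-1))"
proof (induction a)
  case 0 then show ?case by simp
next
  case (Suc a)
  have "bernoulli_poly n ((- of_nat (Suc a)) + 1) - bernoulli_poly n (- of_nat (Suc a))
     = of_nat n * (- of_nat (Suc a))^(n-1)" by (rule bp_diff) (use Suc in simp)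
  moreover have "(- of_nat (Suc a)) + 1 = (- of_nat a :: rat)" by simp
  ultimately have "bernoulli_poly n (- of_nat (Suc a)) = bernoulli_poly n (- of_nat a) - of_nat n * (- of_nat (Suc a))^(n-1)"
    by simp
  then show ?case using Suc by (simp add: algebra_simps)
qed

context
  fixes p :: nat
  assumes pp: "prime p" and podd: "odd p"
begin

lemma p3: "p \<ge> 3"
proof -
  have "p \<ge> 2" using pp prime_ge_2_nat by blast
  moreover have "p \<noteq> 2" using podd by auto
  ultimately show ?thesis by linarith
qed

lemma powcong: "X \<in> Zp p \<Longrightarrow> Y \<in> Zp p \<Longrightarrow> X - Y \<in> pZ p \<Longrightarrow> X^e - Y^e \<in> pZ p"
proof (induction e)
  case 0 then show ?case using pz_0[OF pp] by simp
next
  case (Suc e)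
  have e: "X^Suc e - Y^Suc e = X * (X^e - Y^e) + Y^e * (X - Y)" by (simp add: algebra_simps)
  have a: "X * (X^e - Y^e) \<in> pZ p" using Suc by (intro pz_multl[OF pp]) auto
  have b: "Y^e * (X - Y) \<in> pZ p" using Suc by (intro pz_multl[OF pp] zp_power[OF pp]) auto
  show ?case unfolding e by (rule pz_add[OF pp a b])
qed

definition gp :: "rat \<Rightarrow> rat" where
  "gp X = bernoulli_poly (p - 1) X - bernoulli_num (p - 1)"

lemma gp_eq: "gp X = bernoulli_poly (p - 1) X - bernoulli_num (p - 1)"
  unfolding gp_def by simp

lemma gp_sum: "gp X = (\<Sum>k<p-1. of_nat ((p-1) choose k) * bernoulli_num k * X^(p-1-k))"
  unfolding gp_def bernoulli_poly_def by (simp add: lessThan_Suc_atMost[symmetric])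

lemma gp_zp: "X \<in> Zp p \<Longrightarrow> gp X \<in> Zp p"
  unfolding gp_sum using pp bern_zp[OF pp]
  by (intro zp_sum zp_mult zp_power) (auto)

lemma gp_cong: "X \<in> Zp p \<Longrightarrow> Y \<in> Zp p \<Longrightarrow> X - Y \<in> pZ p \<Longrightarrow> gp X - gp Y \<in> pZ p"
proof -
  assume h: "X \<in> Zp p" "Y \<in> Zp p" "X - Y \<in> pZ p"
  have "gp X - gp Y = (\<Sum>k<p-1. (of_nat ((p-1) choose k) * bernoulli_num k) * (X^(p-1-k) - Y^(p-1-k)))"
    unfolding gp_sum sum_subtractf[symmetric] by (intro sum.cong) (auto simp: algebra_simps)
  also have "\<dots> \<in> pZ p"
    using pp bern_zp[OF pp] powcong[OF h]
    by (intro pz_sum pz_multl zp_mult) auto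
  finally show ?thesis .
qed

lemma gp_neg: "gp (- of_nat a) = of_nat (p - 1) * (\<Sum>i=1..a. of_nat i ^ (p - 2))"
proof -
  have "gp (- of_nat a) = - of_nat (p-1) * (\<Sum>i=1..a. (- of_nat i)^(p-1-1))"
    unfolding gp_def using bp_neg[of "p-1" a] bp0[of "p-1"] p3 by simp
  moreover have "odd (p - 1 - 1)" using podd p3 by presburger
  ultimately show ?thesis by (simp add: sum_negf numeral_2_eq_2)
qed

lemma fermat_term: "1 \<le> i \<Longrightarrow> (if \<not> p dvd i then 1 / of_nat i else 0) - of_nat i ^ (p - 2) \<in> pZ p"
proof (cases "p dvd i")
  case True
  then have "int p dvd int i" by simp
  then have "of_int (int i) \<in> pZ p" using pz_int[OF pp] by blast
  then have "(of_nat i :: rat) * of_nat i ^ (p - 3) \<in> pZ p" using pz_mult[OF pp] zp_power[OF pp] zp_nat[OF pp] by simp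
  moreover have "(of_nat i :: rat) * of_nat i ^ (p - 3) = of_nat i ^ (p - 2)"
  proof -
    have "p - 2 = Suc (p - 3)" using p3 by simp
    then show ?thesis by simp
  qed
  ultimately show ?thesis using True pz_minus[OF pp] by simp
next
  case False
  assume i: "1 \<le> i"
  have "[i ^ (p - 1) = 1] (mod p)" using fermat_theorem[OF pp False] .
  then have "[int i ^ (p - 1) = 1] (mod int p)" using cong_int_iff[of "i^(p-1)" 1 p] by simp
  then have "int p dvd int i ^ (p - 1) - 1" by (simp add: cong_iff_dvd_diff)
  then have "int p dvd 1 - int i ^ (p - 1)" by (metis dvd_minus_iff minus_diff_eq)
  then have "of_int (1 - int i ^ (p - 1)) \<in> pZ p" using pz_int[OF pp] by blast
  then have A: "(1 - of_nat i ^ (p - 1)) / of_nat i \<in> pZ p"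
    using pz_mult[OF pp _ zp_divn[OF pp zp_nat[OF pp, of 1] False]] by simp
  have "p - 1 = Suc (p - 2)" using p3 by simp
  then have "(1 - of_nat i ^ (p - 1)) / of_nat i = 1 / of_nat i - (of_nat i ^ (p - 2) :: rat)"
    using i by (simp add: field_simps)
  then show ?thesis using A False by simp
qed

end


context
  fixes m n p :: nat
  assumes m0: "m > 0" and n0: "n > 0" and pp: "prime p" and podd: "odd p" and pm: "\<not> p dvd m"
begin

lemma p0: "p > 0" using pp prime_gt_0_nat by blast

lemma conv: "1 \<le> r \<Longrightarrow> k < p \<Longrightarrow> (int m dvd int k - int r * int p) \<longleftrightarrow> m dvd r*p - k"
proof -
  assume r: "1 \<le> r" and k: "k < p"
  have "p \<le> r * p" using r by simp
  then have kp: "k \<le> r*p" using k by linarith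
  have "int k - int r * int p = - int (r*p - k)" using kp by (simp add: of_nat_diff)
  then show ?thesis by simp
qed

definition Hs :: rat where "Hs = (\<Sum>j\<in>{j\<in>{1..p*n div m}. \<not> p dvd j}. 1 / of_nat j)"

lemma Hs_alt: "Hs = (\<Sum>k\<in>{k\<in>{1..nat \<lfloor>of_nat (p * n) / (of_nat m :: rat)\<rfloor>}. \<not> p dvd k}. 1 / of_nat k)"
  unfolding Hs_def floor_divide_of_nat_eq by simp

lemma H_gp: "gp p (- of_nat (p*n div m)) + Hs \<in> pZ p"
proof -
  define N where "N = p*n div m"
  define S where "S = (\<Sum>i=1..N. (of_nat i :: rat) ^ (p - 2))"
  have H: "Hs = (\<Sum>i\<in>{1..N}. if \<not> p dvd i then 1 / of_nat i else 0)"
    unfolding Hs_def N_def by (rule sum.inter_filter) simp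
  have "of_nat (p - 1) = (of_nat p - 1 :: rat)" using p0 by (simp add: of_nat_diff)
  then have "gp p (- of_nat N) + Hs = of_nat p * S + (\<Sum>i\<in>{1..N}. (if \<not> p dvd i then 1 / of_nat i else 0) - of_nat i ^ (p - 2))"
    unfolding gp_neg[OF pp podd] H S_def sum_subtractf by (simp add: algebra_simps)
  also have "\<dots> \<in> pZ p"
    unfolding S_def
    by (intro pz_add[OF pp] pz_p[OF pp] zp_sum[OF pp] zp_power[OF pp] zp_nat[OF pp] pz_sum[OF pp] fermat_term[OF pp podd]) auto
  finally show ?thesis unfolding N_def .
qed


lemma K_H: "of_nat m * (\<Sum>r=1..n. K p (int r) m) + Hs \<in> pZ p"
proof -
  define S where "S r = {k\<in>{1..p-1}. int m dvd int k - int r * int p}" for r :: nat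
  define Sig where "Sig = Sigma {1..n} S"
  define jj where "jj = (\<lambda>(r::nat,k::nat). (r*p-k) div m)"
  have Kd: "K p (int r) m = (\<Sum>k\<in>S r. 1 / of_nat k)" for r unfolding K_def S_def by simp
  have fin: "finite (S r)" for r unfolding S_def by simp
  have mem: "a \<in> Sig \<longleftrightarrow> (1 \<le> fst a \<and> fst a \<le> n \<and> 1 \<le> snd a \<and> snd a < p \<and> m dvd fst a * p - snd a)" for a
  proof -
    obtain r k where a: "a = (r, k)" by (cases a)
    show ?thesis unfolding a Sig_def S_def using conv[of r k] p0 by auto
  qed
  have 1: "(\<Sum>r=1..n. K p (int r) m) = (\<Sum>a\<in>Sig. 1 / of_nat (snd a))"
    unfolding Kd Sig_def by (subst sum.Sigma) (auto simp: fin split_def)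
  have 2: "(\<Sum>a\<in>Sig. 1 / of_nat (jj a)) = Hs"
    unfolding Hs_def
  proof (rule sum.reindex_bij_witness[where j=jj and i="\<lambda>j. (m*j div p + 1, (m*j div p + 1)*p - m*j)"])
    fix a assume "a \<in> Sig"
    then obtain r k where a: "a = (r,k)" "1 \<le> r" "r \<le> n" "1 \<le> k" "k < p" "m dvd r*p - k"
      using mem by (cases a) auto
    note A = arith1[OF m0 pp a(2,3,4,5,6)]
    have A4: "m*((r*p-k) div m) div p + 1 = r" and A5: "(m*((r*p-k) div m) div p + 1)*p - m*((r*p-k) div m) = k"
      using A by auto
    show "(m * jj a div p + 1, (m * jj a div p + 1) * p - m * jj a) = a"
      unfolding a(1) jj_def prod.case A4 using A5[unfolded A4] by simp
    show "jj a \<in> {j \<in> {1..p * n div m}. \<not> p dvd j}"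
      using A unfolding a(1) jj_def by simp
    show "1 / rat_of_nat (jj a) = 1 / rat_of_nat (jj a)" by simp
  next
    fix j assume "j \<in> {j \<in> {1..p * n div m}. \<not> p dvd j}"
    then have j: "1 \<le> j" "j \<le> p*n div m" "\<not> p dvd j" by auto
    note A = arith2[OF m0 pp pm j]
    show "jj (m * j div p + 1, (m * j div p + 1) * p - m * j) = j"
      using A m0 unfolding jj_def by simp
    show "(m * j div p + 1, (m * j div p + 1) * p - m * j) \<in> Sig"
      unfolding mem using A by simp
  qed
  have 3: "1 / of_nat (snd a) * of_nat m + 1 / of_nat (jj a) \<in> pZ p" if aS: "a \<in> Sig" for a
  proof -
    obtain r k where a: "a = (r,k)" "1 \<le> r" "r \<le> n" "1 \<le> k" "k < p" "m dvd r*p - k"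
      using mem aS by (cases a) auto
    note A = arith1[OF m0 pp a(2,3,4,5,6)]
    define j where "j = jj a"
    have j: "1 \<le> j" "\<not> p dvd j" "m * j = r*p - k" using A unfolding j_def a(1) jj_def by auto
    have "k \<le> r * p" using a(2,5) by (metis le_trans less_imp_le_nat mult_1 mult_le_mono1)
    then have e: "m * j + k = r * p" using j by simp
    have pk: "\<not> p dvd k" using a(4,5) by (simp add: nat_dvd_not_less)
    then have pkj: "\<not> p dvd (k * j)" using j pp prime_dvd_mult_iff by blast
    have "(of_nat m * of_nat j + of_nat k :: rat) = of_nat r * of_nat p"
      using arg_cong[OF e, of "of_nat :: nat \<Rightarrow> rat"] by simp
    then have "1 / of_nat k * of_nat m + 1 / of_nat j = of_nat p * (of_nat r / of_nat (k * j) :: rat)"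
      using a(4) j(1) by (simp add: field_simps)
    also have "\<dots> \<in> pZ p" by (intro pz_p[OF pp] zp_divn[OF pp zp_nat[OF pp] pkj])
    finally show ?thesis unfolding a(1) j_def by simp
  qed
  have "of_nat m * (\<Sum>r=1..n. K p (int r) m) + Hs = (\<Sum>a\<in>Sig. 1 / of_nat (snd a) * of_nat m + 1 / of_nat (jj a))"
    unfolding 1 2[symmetric] sum.distrib sum_distrib_left by (simp add: mult.commute)
  also have "\<dots> \<in> pZ p" using 3 by (intro pz_sum[OF pp])
  finally show ?thesis .
qed


lemma K_zp: "K p r m \<in> Zp p"
  unfolding K_def
  by (intro zp_sum[OF pp] zp_divn[OF pp zp_nat[OF pp, of 1], simplified]) (auto simp: nat_dvd_not_less)

lemma K_refl: "K p r m + K p (1 - r) m \<in> pZ p"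
proof -
  define T where "T = {k\<in>{1..p-1}. int m dvd int k - r * int p}"
  have d: "int (p - a) - (1 - r) * int p = - (int a - r * int p)" if "a \<le> p" for a
    using that by (simp add: of_nat_diff algebra_simps)
  have d2: "int a - (1 - r) * int p = - (int (p - a) - r * int p)" if "a \<le> p" for a
    using that by (simp add: of_nat_diff algebra_simps)
  have "(\<Sum>k\<in>T. 1 / of_nat (p - k)) = K p (1 - r) m"
    unfolding K_def T_def
  proof (rule sum.reindex_bij_witness[where i="\<lambda>k. p - k" and j="\<lambda>k. p - k"])
    fix a assume a: "a \<in> {k \<in> {1..p - 1}. int m dvd int k - r * int p}"
    then show "p - (p - a) = a" by auto
    have ap: "a \<le> p" using a by auto
    have X: "int m dvd - (int a - r * int p)" using a by (simp only: dvd_minus_iff) auto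
    have "int m dvd int (p - a) - (1 - r) * int p"
      unfolding d[OF ap] by (rule X)
    then show "p - a \<in> {k \<in> {1..p - 1}. int m dvd int k - (1 - r) * int p}"
      using a by auto
    show "1 / rat_of_nat (p - a) = 1 / rat_of_nat (p - a)" by simp
  next
    fix b assume b: "b \<in> {k \<in> {1..p - 1}. int m dvd int k - (1 - r) * int p}"
    then show "p - (p - b) = b" by auto
    have bp: "b \<le> p" using b by auto
    have "int m dvd int b - (1 - r) * int p" using b by auto
    then have "int m dvd - (int (p - b) - r * int p)" unfolding d2[OF bp] .
    then have "int m dvd int (p - b) - r * int p" by (simp only: dvd_minus_iff)
    then show "p - b \<in> {k \<in> {1..p - 1}. int m dvd int k - r * int p}"
      using b by auto
  qed
  then have "K p r m + K p (1 - r) m = (\<Sum>k\<in>T. 1 / of_nat k + 1 / of_nat (p - k))"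
    unfolding sum.distrib by (simp add: K_def T_def)
  also have "\<dots> = (\<Sum>k\<in>T. of_nat p * (1 / of_nat (k * (p - k))))"
  proof (rule sum.cong)
    fix k assume "k \<in> T"
    then have k: "1 \<le> k" "k < p" unfolding T_def using p0 by auto
    then have "(of_nat (p - k) :: rat) = of_nat p - of_nat k" by (simp add: of_nat_diff)
    then show "1 / of_nat k + 1 / of_nat (p - k) = of_nat p * (1 / of_nat (k * (p - k)) :: rat)"
      using k by (simp add: field_simps)
  qed simp
  also have "\<dots> \<in> pZ p"
  proof (intro pz_sum[OF pp] pz_p[OF pp] zp_divn[OF pp zp_nat[OF pp, of 1], simplified])
    fix k assume "k \<in> T"
    then have k: "1 \<le> k" "k < p" unfolding T_def using p0 by auto
    then have "\<not> p dvd k" "\<not> p dvd (p - k)" by (auto simp: nat_dvd_not_less)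
    then show "\<not> p dvd k * (p - k)" using pp prime_dvd_mult_iff by blast
  qed
  finally show ?thesis .
qed

end

theorem corollary2p1:
  fixes m n p :: nat
  assumes "m > 0" and "n > 0" and "prime p" and "odd p" and "\<not> p dvd m"
  shows "rat_cong (bernoulli_poly (p - 1) (frac (of_nat (p * n) / of_nat m)) - bernoulli_num (p - 1))
                  (of_nat m * (\<Sum>r=1..n. K p (int r) m)) p
       \<and> rat_cong (of_nat m * (\<Sum>r=1..n. K p (int r) m))
                  (- (\<Sum>k\<in>{k\<in>{1..nat \<lfloor>of_nat (p * n) / (of_nat m :: rat)\<rfloor>}. \<not> p dvd k}. 1 / of_nat k)) p
       \<and> (\<forall>r::int. rat_cong (K p r m) (- K p (1 - r) m) p)"
proof -
  note pp = assms(3) and podd = assms(4)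
  define N where "N = p * n div m"
  have fl: "\<lfloor>of_nat (p * n) / (of_nat m :: rat)\<rfloor> = int N" unfolding N_def
    by (rule floor_divide_of_nat_eq)
  define x where "x = frac (of_nat (p * n) / (of_nat m :: rat))"
  have x: "x = of_nat (p * n) / of_nat m - of_nat N" unfolding x_def frac_def fl by simp
  have q: "(of_nat (p * n) / of_nat m :: rat) = of_nat p * (of_nat n / of_nat m)" by simp
  have nm: "(of_nat n / of_nat m :: rat) \<in> Zp p" using zp_divn[OF pp zp_nat[OF pp] assms(5)] .
  have xZ: "x \<in> Zp p" unfolding x q by (intro zp_diff[OF pp] zp_mult[OF pp] zp_nat[OF pp] nm)
  have NZ: "- of_nat N \<in> Zp p" by (intro zp_minus[OF pp] zp_nat[OF pp])
  have "x - (- of_nat N) = of_nat p * (of_nat n / of_nat m)" unfolding x q by simp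
  then have "x - (- of_nat N) \<in> pZ p" using pz_p[OF pp nm] by simp
  then have c1: "gp p x - gp p (- of_nat N) \<in> pZ p" using gp_cong[OF pp podd xZ NZ] by blast
  have c2: "gp p (- of_nat N) + Hs m n p \<in> pZ p" using H_gp[OF assms] unfolding N_def .
  have A: "gp p x + Hs m n p \<in> pZ p" using pz_add[OF pp c1 c2] by simp
  have B: "of_nat m * (\<Sum>r=1..n. K p (int r) m) + Hs m n p \<in> pZ p" using K_H[OF assms] .
  have AZ: "gp p x \<in> Zp p" using gp_zp[OF pp podd xZ] .
  have KZ: "of_nat m * (\<Sum>r=1..n. K p (int r) m) \<in> Zp p"
    by (intro zp_mult[OF pp] zp_nat[OF pp] zp_sum[OF pp] K_zp[OF assms])
  have "- Hs m n p = of_nat m * (\<Sum>r=1..n. K p (int r) m) - (of_nat m * (\<Sum>r=1..n. K p (int r) m) + Hs m n p)"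
    by simp
  then have HZ: "- Hs m n p \<in> Zp p" using zp_diff[OF pp KZ pz_zp[OF pp B]] by simp
  have "gp p x - of_nat m * (\<Sum>r=1..n. K p (int r) m) = (gp p x + Hs m n p) - (of_nat m * (\<Sum>r=1..n. K p (int r) m) + Hs m n p)"
    by simp
  then have R1: "rat_cong (gp p x) (of_nat m * (\<Sum>r=1..n. K p (int r) m)) p"
    using pz_cong[OF pp AZ KZ] pz_diff[OF pp A B] by simp
  have R2: "rat_cong (of_nat m * (\<Sum>r=1..n. K p (int r) m)) (- Hs m n p) p"
    using pz_cong[OF pp KZ HZ] B by simp
  have R3: "rat_cong (K p r m) (- K p (1 - r) m) p" for r
    using pz_cong[OF pp K_zp[OF assms] zp_minus[OF pp K_zp[OF assms]]] K_refl[OF assms] by simp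
  have Hs_eq: "Hs m n p = (\<Sum>k\<in>{k\<in>{1..nat \<lfloor>of_nat (p * n) / (of_nat m :: rat)\<rfloor>}. \<not> p dvd k}. 1 / of_nat k)"
    using Hs_alt[OF assms] .
  show ?thesis using R1 R2 R3 unfolding Hs_eq x_def gp_eq[OF pp podd] by blast
qed

end
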